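(* There exists a finite constant $C=C(d)$ such that for any $\ell\in\mathbb N$ there exists a flow $\phi_\ell$ connecting the point mass at $0$ to $q_\ell$, with support contained in $\Lambda_{2\ell-1}$, such that \[ \sum_{z\in\mathbb Z^d,b\in\mathcal B}\phi_\ell(z;b)^2\le Cg_d(\ell),\qquad\sum_{z\in\mathbb Z^d,b\in\mathcal B}|\phi_\ell(z;b)|\le C\ell. \]
   Context: $\mathcal B=\{e_1,\dots,e_d\}$ is the canonical basis of $\mathbb Z^d$. $\Lambda_\ell=\{z\in\mathbb Z^d:0\le z_i\le\ell-1,\ i=1,\dots,d\}$; $p_\ell(z)=\ell^{-d}\mathbf 1(z\in\Lambda_\ell)$; $q_\ell=p_\ell*p_\ell$, i.e. $q_\ell(z)=\sum_yp_\ell(y)p_\ell(z-y)$. A flow is a function $\phi:\mathbb Z^d\times\mathcal B\to\mathbb R$; its support is contained in $\Lambda$ if $\phi(x;b)\ne0$ implies $\{x,x+b\}\subseteq\Lambda$. A flow $\phi$ connects a measure $p$ to a measure $q$ if $p(z)-q(z)=\sum_{b\in\mathcal B}\big(\phi(z;b)-\phi(z-b;b)\big)$ for all $z\in\mathbb Z^d$. $g_d(\ell)=\ell,\log\ell,1$ for $d=1$, $d=2$, $d\ge3$. *)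

theory Defs
  imports "HOL-Analysis.Analysis"
begin

text \<open>Points of Z^d are modelled as int ^ 'd for a finite index type 'd (d = CARD('d)).
  The canonical basis vector e_i is axis i 1; a flow is indexed by the basis index i :: 'd.\<close>

definition basis_vec :: "'d::finite \<Rightarrow> int ^ 'd" where
  "basis_vec i = axis i 1"

definition Lam :: "nat \<Rightarrow> (int ^ 'd::finite) set" where
  "Lam l = {z. \<forall>i. 0 \<le> z $ i \<and> z $ i \<le> int l - 1}"

definition punif :: "nat \<Rightarrow> int ^ 'd::finite \<Rightarrow> real" where
  "punif l z = (if z \<in> Lam l then 1 / real l ^ CARD('d) else 0)"

definition qconv :: "nat \<Rightarrow> int ^ 'd::finite \<Rightarrow> real" where
  "qconv l z = (\<Sum>y\<in>Lam l. punif l y * punif l (z - y))"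

definition point_mass :: "int ^ 'd::finite \<Rightarrow> real" where
  "point_mass z = (if z = 0 then 1 else 0)"

definition flow_supported_in :: "(int ^ 'd::finite \<Rightarrow> 'd \<Rightarrow> real) \<Rightarrow> (int ^ 'd) set \<Rightarrow> bool" where
  "flow_supported_in \<phi> \<Lambda> \<longleftrightarrow>
     (\<forall>x b. \<phi> x b \<noteq> 0 \<longrightarrow> x \<in> \<Lambda> \<and> x + basis_vec b \<in> \<Lambda>)"

definition flow_connects :: "(int ^ 'd::finite \<Rightarrow> 'd \<Rightarrow> real) \<Rightarrow> (int ^ 'd \<Rightarrow> real) \<Rightarrow> (int ^ 'd \<Rightarrow> real) \<Rightarrow> bool" where
  "flow_connects \<phi> p q \<longleftrightarrow>
     (\<forall>z. p z - q z = (\<Sum>b\<in>UNIV. \<phi> z b - \<phi> (z - basis_vec b) b))"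

definition g_d :: "nat \<Rightarrow> nat \<Rightarrow> real" where
  "g_d d l = (if d = 1 then real l else if d = 2 then ln (real l) else 1)"

end

theory Submission
  imports Defs
begin

definition Sset :: "nat \<Rightarrow> int \<Rightarrow> int set" where
  "Sset t k = {y \<in> {0..int t - 1}. k - y \<in> {0..int t - 1}}"

definition tau :: "nat \<Rightarrow> int \<Rightarrow> real" where
  "tau t k = real (card (Sset t k)) / (real t)^2"

definition hh :: "nat \<Rightarrow> int \<Rightarrow> real" where
  "hh t k = (\<Sum>j\<in>{0..k}. tau t j - tau (Suc t) j)"

lemma Sset_finite: "finite (Sset t k)"
  unfolding Sset_def by (rule finite_subset[of _ "{0..int t - 1}"]) auto

lemma Sset_card_le: "card (Sset t k) \<le> t"
proof -
  have "card (Sset t k) \<le> card {0..int t - 1}"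
    unfolding Sset_def by (intro card_mono) auto
  thus ?thesis by simp
qed

lemma Sset_mono: "Sset t k \<subseteq> Sset (Suc t) k"
  unfolding Sset_def by auto

lemma Sset_Suc: "Sset (Suc t) k \<subseteq> insert (int t) (insert (k - int t) (Sset t k))"
  unfolding Sset_def by auto

lemma Sset_card_Suc: "card (Sset (Suc t) k) \<le> card (Sset t k) + 2"
proof -
  have "card (Sset (Suc t) k) \<le> card (insert (int t) (insert (k - int t) (Sset t k)))"
    by (intro card_mono Sset_Suc) (simp add: Sset_finite)
  also have "\<dots> \<le> card (Sset t k) + 2"
    by (auto simp: card_insert_if Sset_finite)
  finally show ?thesis .
qed

lemma Sset_card_mono: "card (Sset t k) \<le> card (Sset (Suc t) k)"
  by (intro card_mono Sset_mono) (simp add: Sset_finite)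

lemma tau_nonneg: "0 \<le> tau t k"
  unfolding tau_def by simp

lemma tau_le: "t \<ge> 1 \<Longrightarrow> tau t k \<le> 1 / real t"
proof -
  assume t: "t \<ge> 1"
  have "real (card (Sset t k)) \<le> real t" using Sset_card_le by simp
  hence "real (card (Sset t k)) / (real t)^2 \<le> real t / (real t)^2"
    by (intro divide_right_mono) auto
  also have "\<dots> = 1 / real t" using t by (simp add: power2_eq_square)
  finally show ?thesis unfolding tau_def .
qed

lemma Sset_empty: "k < 0 \<or> k > 2 * int t - 2 \<Longrightarrow> Sset t k = {}"
  unfolding Sset_def by auto

lemma tau_supp: "tau t k \<noteq> 0 \<Longrightarrow> 0 \<le> k \<and> k \<le> 2 * int t - 2"
  unfolding tau_def by (cases "k < 0 \<or> k > 2 * int t - 2") (auto simp: Sset_empty)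

lemma tau_one: "tau 1 k = (if k = 0 then 1 else 0)"
proof -
  have "Sset 1 k = (if k = 0 then {0} else {})" unfolding Sset_def by (cases "k = 0") auto
  thus ?thesis unfolding tau_def by simp
qed

lemma card_Sset_sum: "real (card (Sset t k)) = (\<Sum>y\<in>{0..int t - 1}. if k - y \<in> {0..int t - 1} then 1 else 0)"
  unfolding Sset_def by (subst sum.inter_filter[symmetric]) auto

lemma mass:
  assumes K: "finite K" "{0..2 * int t - 2} \<subseteq> K" and t: "t \<ge> 1"
  shows "(\<Sum>k\<in>K. tau t k) = 1"
proof -
  have "(\<Sum>k\<in>K. real (card (Sset t k))) = (\<Sum>k\<in>K. \<Sum>y\<in>{0..int t - 1}. if k - y \<in> {0..int t - 1} then 1 else 0)"
    by (simp add: card_Sset_sum)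
  also have "\<dots> = (\<Sum>y\<in>{0..int t - 1}. \<Sum>k\<in>K. if k - y \<in> {0..int t - 1} then 1 else 0)"
    by (rule sum.swap)
  also have "\<dots> = (\<Sum>y\<in>{0..int t - 1}. real t)"
  proof (rule sum.cong[OF refl])
    fix y assume y: "y \<in> {0..int t - 1}"
    have "(\<Sum>k\<in>K. if k - y \<in> {0..int t - 1} then (1::real) else 0) = real (card {k\<in>K. k - y \<in> {0..int t - 1}})"
      using K by (subst sum.inter_filter[symmetric]) auto
    also have "{k\<in>K. k - y \<in> {0..int t - 1}} = {y..y + int t - 1}"
      using y K by auto
    finally show "(\<Sum>k\<in>K. if k - y \<in> {0..int t - 1} then (1::real) else 0) = real t" by simp
  qed
  also have "\<dots> = (real t)^2" by (simp add: power2_eq_square)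
  finally show ?thesis using t unfolding tau_def by (simp add: sum_divide_distrib[symmetric])
qed

lemma tau_diff: assumes t: "t \<ge> 1" shows "\<bar>tau t k - tau (Suc t) k\<bar> \<le> 3 / (real t)^2"
proof -
  define c where "c = real (card (Sset t k))"
  define c' where "c' = real (card (Sset (Suc t) k))"
  have c1: "c \<le> c'" "c' \<le> c + 2" "c \<le> real t" "0 \<le> c"
    unfolding c_def c'_def using Sset_card_mono[of t k] Sset_card_Suc[of t k] Sset_card_le[of t k] by auto
  have tp: "real t \<ge> 1" using t by simp
  have e: "tau t k - tau (Suc t) k = c / (real t)^2 - c' / (real t + 1)^2"
    unfolding tau_def c_def c'_def by simp
  have a: "c / (real t)^2 - c' / (real t + 1)^2 \<le> 3 / (real t)^2"
  proof -
    have "c' / (real t + 1)^2 \<ge> c / (real t + 1)^2" using c1 by (simp add: divide_right_mono)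
    moreover have "c / (real t)^2 - c / (real t + 1)^2 = c * (2 * real t + 1) / ((real t)^2 * (real t + 1)^2)"
      using tp by (simp add: divide_simps) (simp add: power2_eq_square algebra_simps)
    moreover have "c * (2 * real t + 1) / ((real t)^2 * (real t + 1)^2) \<le> 3 / (real t)^2"
    proof -
      have "c * (2 * real t + 1) \<le> real t * (3 * real t)" using c1 tp
        by (intro mult_mono) auto
      also have "\<dots> \<le> 3 * (real t + 1)^2" using tp by (simp add: power2_eq_square field_simps)
      finally have "c * (2 * real t + 1) \<le> 3 * (real t + 1)^2" .
      hence "c * (2 * real t + 1) / ((real t)^2 * (real t + 1)^2) \<le> 3 * (real t + 1)^2 / ((real t)^2 * (real t + 1)^2)"
        by (rule divide_right_mono) simp
      also have "\<dots> = 3 / (real t)^2" using tp by simp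
      finally show ?thesis .
    qed
    ultimately show ?thesis by linarith
  qed
  have b: "c' / (real t + 1)^2 - c / (real t)^2 \<le> 3 / (real t)^2"
  proof -
    have a1: "c' / (real t + 1)^2 \<le> (c + 2) / (real t + 1)^2" using c1 by (simp add: divide_right_mono)
    have a0: "(c + 2) / (real t + 1)^2 = c / (real t + 1)^2 + 2 / (real t + 1)^2" by (simp add: add_divide_distrib)
    have a2: "c / (real t + 1)^2 \<le> c / (real t)^2" using c1 tp
      by (intro divide_left_mono) (auto simp: power2_eq_square intro: mult_mono)
    have a3: "2 / (real t + 1)^2 \<le> 2 / (real t)^2" using tp
      by (intro divide_left_mono) (auto simp: power2_eq_square intro: mult_mono)
    have a4: "2 / (real t)^2 \<le> 3 / (real t)^2" by (rule divide_right_mono) auto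
    from a0 a1 a2 a3 a4 show ?thesis by linarith
  qed
  show ?thesis using a b e by linarith
qed

lemma hh_step: "hh t k - hh t (k - 1) = tau t k - tau (Suc t) k"
proof (cases "k \<ge> 0")
  case True
  have "{0..k} = insert k {0..k-1}" using True by auto
  thus ?thesis unfolding hh_def by simp
next
  case False
  thus ?thesis unfolding hh_def using tau_supp[of t k] tau_supp[of "Suc t" k] by force
qed

lemma hh_neg: "k < 0 \<Longrightarrow> hh t k = 0"
  unfolding hh_def by simp

lemma hh_big: assumes t: "t \<ge> 1" and k: "k \<ge> 2 * int t" shows "hh t k = 0"
proof -
  have "(\<Sum>j\<in>{0..k}. tau t j) = 1" using t k by (intro mass) auto
  moreover have "(\<Sum>j\<in>{0..k}. tau (Suc t) j) = 1" using t k by (intro mass) auto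
  ultimately show ?thesis unfolding hh_def by (simp add: sum_subtractf)
qed

lemma hh_bound: assumes t: "t \<ge> 1" shows "\<bar>hh t k\<bar> \<le> 9 / real t"
proof -
  have "\<bar>hh t k\<bar> \<le> (\<Sum>j\<in>{0..k}. \<bar>tau t j - tau (Suc t) j\<bar>)"
    unfolding hh_def by (rule sum_abs)
  also have "\<dots> = (\<Sum>j\<in>{0..k} \<inter> {0..2 * int t}. \<bar>tau t j - tau (Suc t) j\<bar>)"
  proof (rule sum.mono_neutral_right)
    show "\<forall>i\<in>{0..k} - {0..k} \<inter> {0..2 * int t}. \<bar>tau t i - tau (Suc t) i\<bar> = 0"
      using tau_supp[of t] tau_supp[of "Suc t"] by force
  qed auto
  also have "\<dots> \<le> (\<Sum>j\<in>{0..2 * int t}. \<bar>tau t j - tau (Suc t) j\<bar>)"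
    by (rule sum_mono2) auto
  also have "\<dots> \<le> (\<Sum>j\<in>{0..2 * int t}. 3 / (real t)^2)"
    by (rule sum_mono) (rule tau_diff[OF t])
  also have "\<dots> = real (2 * t + 1) * (3 / (real t)^2)"
  proof -
    have "card {0..2 * int t} = 2 * t + 1" by simp
    thus ?thesis by simp
  qed
  also have "\<dots> \<le> 9 / real t"
  proof -
    have tp: "real t \<ge> 1" using t by simp
    have "real (2 * t + 1) \<le> 3 * real t" using tp by simp
    hence "real (2 * t + 1) * 3 \<le> 9 * real t" by simp
    thus ?thesis using tp by (simp add: field_simps power2_eq_square)
  qed
  finally show ?thesis .
qed

lemma Lam_bij: "bij_betw vec_nth (Lam M :: (int ^ 'd::finite) set) (PiE UNIV (\<lambda>_. {0..int M - 1}))"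
proof (rule bij_betwI[where g = vec_lambda])
  show "vec_nth \<in> (Lam M :: (int ^ 'd) set) \<rightarrow> PiE UNIV (\<lambda>_. {0..int M - 1})"
    unfolding Lam_def by auto
  show "vec_lambda \<in> PiE UNIV (\<lambda>_. {0..int M - 1}) \<rightarrow> (Lam M :: (int ^ 'd) set)"
    unfolding Lam_def by auto
qed auto

lemma Lam_finite: "finite (Lam M :: (int ^ 'd::finite) set)"
  using bij_betw_finite[OF Lam_bij] by (simp add: finite_PiE)

lemma box_prod:
  fixes f :: "'d::finite \<Rightarrow> int \<Rightarrow> real"
  shows "(\<Sum>z\<in>Lam M. \<Prod>i\<in>UNIV. f i (z $ i)) = (\<Prod>i\<in>UNIV. \<Sum>k\<in>{0..int M - 1}. f i k)"
proof -
  have "(\<Prod>i\<in>UNIV. \<Sum>k\<in>{0..int M - 1}. f i k) = (\<Sum>g\<in>PiE UNIV (\<lambda>_. {0..int M - 1}). \<Prod>i\<in>UNIV. f i (g i))"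
    by (rule prod_sum_PiE) auto
  also have "\<dots> = (\<Sum>z\<in>Lam M. \<Prod>i\<in>UNIV. f i (z $ i))"
    by (rule sum.reindex_bij_betw[OF Lam_bij, symmetric])
  finally show ?thesis by simp
qed

lemma telesc:
  fixes r :: "'a \<Rightarrow> nat" and x y :: "'a \<Rightarrow> real"
  assumes "finite S"
  shows "inj_on r S \<Longrightarrow> (\<Sum>b\<in>S. \<Prod>i\<in>S. (if i = b then y i - x i else if r i < r b then x i else y i))
          = (\<Prod>i\<in>S. y i) - (\<Prod>i\<in>S. x i)"
  using assms
proof (induction S rule: finite_ranking_induct[where f = r])
  case empty
  then show ?case by simp
next
  case (insert m S)
  show ?case
  proof (cases "m \<in> S")
    case True
    then show ?thesis using insert by (simp add: insert_absorb)
  next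
    case False
    have inj: "inj_on r S" using insert.prems by (auto simp: inj_on_def)
    have lt: "i \<in> S \<Longrightarrow> r i < r m" for i
      using insert(2)[of i] insert.prems False by (metis inj_on_contraD insertCI le_neq_implies_less)
    have t1: "(\<Prod>i\<in>insert m S. (if i = m then y i - x i else if r i < r m then x i else y i))
        = (y m - x m) * (\<Prod>i\<in>S. x i)"
    proof -
      have "(\<Prod>i\<in>S. (if i = m then y i - x i else if r i < r m then x i else y i)) = (\<Prod>i\<in>S. x i)"
        using False lt by (intro prod.cong) auto
      thus ?thesis using False insert(1) by (simp add: prod.insert)
    qed
    have t2: "(\<Prod>i\<in>insert m S. (if i = b then y i - x i else if r i < r b then x i else y i))
        = y m * (\<Prod>i\<in>S. (if i = b then y i - x i else if r i < r b then x i else y i))" if b: "b \<in> S" for b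
    proof -
      have "m \<noteq> b" using b False by auto
      moreover have "\<not> r m < r b" using lt[OF b] by simp
      ultimately show ?thesis using False insert(1) by (simp add: prod.insert)
    qed
    have "(\<Sum>b\<in>insert m S. \<Prod>i\<in>insert m S. (if i = b then y i - x i else if r i < r b then x i else y i))
       = (y m - x m) * (\<Prod>i\<in>S. x i) + (\<Sum>b\<in>S. y m * (\<Prod>i\<in>S. (if i = b then y i - x i else if r i < r b then x i else y i)))"
    proof -
      have s1: "(\<Sum>b\<in>insert m S. \<Prod>i\<in>insert m S. (if i = b then y i - x i else if r i < r b then x i else y i))
        = (\<Prod>i\<in>insert m S. (if i = m then y i - x i else if r i < r m then x i else y i))
          + (\<Sum>b\<in>S. \<Prod>i\<in>insert m S. (if i = b then y i - x i else if r i < r b then x i else y i))"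
        by (rule sum.insert[OF insert(1) False])
      have s2: "(\<Sum>b\<in>S. \<Prod>i\<in>insert m S. (if i = b then y i - x i else if r i < r b then x i else y i))
        = (\<Sum>b\<in>S. y m * (\<Prod>i\<in>S. (if i = b then y i - x i else if r i < r b then x i else y i)))"
        by (rule sum.cong[OF refl t2])
      show ?thesis by (simp only: s1 s2 t1)
    qed
    also have "\<dots> = (y m - x m) * (\<Prod>i\<in>S. x i) + y m * ((\<Prod>i\<in>S. y i) - (\<Prod>i\<in>S. x i))"
      using insert.IH[OF inj] insert(1) by (simp add: sum_distrib_left[symmetric])
    also have "\<dots> = (\<Prod>i\<in>insert m S. y i) - (\<Prod>i\<in>insert m S. x i)"
      using False insert(1) by (simp add: prod.insert algebra_simps)
    finally show ?thesis .
  qed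
qed

lemma prod_diff_one:
  fixes f g :: "'a \<Rightarrow> real"
  assumes "finite A" "b \<in> A" "\<And>i. i \<in> A \<Longrightarrow> i \<noteq> b \<Longrightarrow> f i = g i"
  shows "prod f A - prod g A = (\<Prod>i\<in>A. if i = b then f i - g i else f i)"
proof -
  have e1: "prod g (A - {b}) = prod f (A - {b})" using assms by (intro prod.cong) auto
  have e2: "(\<Prod>i\<in>A - {b}. if i = b then f i - g i else f i) = prod f (A - {b})"
    by (intro prod.cong) auto
  have "prod f A = f b * prod f (A - {b})" using assms by (simp add: prod.remove)
  moreover have "prod g A = g b * prod f (A - {b})" using assms e1 by (simp add: prod.remove)
  moreover have "(\<Prod>i\<in>A. if i = b then f i - g i else f i) = (f b - g b) * prod f (A - {b})"
    using assms e2 prod.remove[of A b "\<lambda>i. if i = b then f i - g i else f i"] by simp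
  ultimately show ?thesis by (simp add: algebra_simps)
qed

lemma prod_ind:
  fixes P :: "'a \<Rightarrow> bool"
  assumes "finite A"
  shows "(\<Prod>i\<in>A. if P i then 1 else 0 :: real) = (if \<forall>i\<in>A. P i then 1 else 0)"
  using assms by (auto simp: prod_zero_iff)

definition fac :: "('d::finite \<Rightarrow> nat) \<Rightarrow> nat \<Rightarrow> 'd \<Rightarrow> 'd \<Rightarrow> int \<Rightarrow> real" where
  "fac r t b i k = (if i = b then hh t k else if r i < r b then tau (Suc t) k else tau t k)"

definition Phi :: "('d::finite \<Rightarrow> nat) \<Rightarrow> nat \<Rightarrow> int ^ 'd \<Rightarrow> 'd \<Rightarrow> real" where
  "Phi r t z b = (\<Prod>i\<in>UNIV. fac r t b i (z $ i))"

definition phi :: "('d::finite \<Rightarrow> nat) \<Rightarrow> nat \<Rightarrow> int ^ 'd \<Rightarrow> 'd \<Rightarrow> real" where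
  "phi r l z b = (\<Sum>t\<in>{1..<l}. Phi r t z b)"

definition Aprod :: "nat \<Rightarrow> int ^ 'd::finite \<Rightarrow> real" where
  "Aprod t z = (\<Prod>i\<in>UNIV. tau t (z $ i))"

lemma vec_minus_basis: "(z - basis_vec b) $ i = z $ i - (if i = b then 1 else 0)"
  by (simp add: basis_vec_def axis_def)

lemma vec_plus_basis: "(z + basis_vec b) $ i = z $ i + (if i = b then 1 else 0)"
  by (simp add: basis_vec_def axis_def)

lemma div_Phi:
  fixes r :: "'d::finite \<Rightarrow> nat"
  assumes "inj r"
  shows "(\<Sum>b\<in>UNIV. Phi r t z b - Phi r t (z - basis_vec b) b) = Aprod t z - Aprod (Suc t) z"
proof -
  have e: "Phi r t z b - Phi r t (z - basis_vec b) b = (\<Prod>i\<in>UNIV. if i = b then tau t (z$i) - tau (Suc t) (z$i)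
        else if r i < r b then tau (Suc t) (z$i) else tau t (z$i))" for b
  proof -
    have "Phi r t z b - Phi r t (z - basis_vec b) b = (\<Prod>i\<in>UNIV. if i = b then fac r t b i (z$i) - fac r t b i ((z - basis_vec b)$i) else fac r t b i (z$i))"
      unfolding Phi_def by (rule prod_diff_one) (auto simp: basis_vec_def axis_def)
    also have "\<dots> = (\<Prod>i\<in>UNIV. if i = b then tau t (z$i) - tau (Suc t) (z$i)
        else if r i < r b then tau (Suc t) (z$i) else tau t (z$i))"
      by (intro prod.cong) (auto simp: fac_def hh_step basis_vec_def axis_def)
    finally show ?thesis .
  qed
  have "(\<Sum>b\<in>UNIV. \<Prod>i\<in>UNIV. if i = b then tau t (z$i) - tau (Suc t) (z$i)
        else if r i < r b then tau (Suc t) (z$i) else tau t (z$i)) = Aprod t z - Aprod (Suc t) z"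
    unfolding Aprod_def
    using telesc[where S = UNIV and r = r and x = "\<lambda>i. tau (Suc t) (z$i)" and y = "\<lambda>i. tau t (z$i)"] assms
    by simp
  thus ?thesis using e by simp
qed

lemma point_mass_Aprod: "point_mass z = Aprod 1 (z :: int ^ 'd::finite)"
proof -
  have "Aprod 1 z = (\<Prod>i\<in>UNIV. if z $ i = 0 then 1 else 0)"
    unfolding Aprod_def tau_one by simp
  also have "\<dots> = (if \<forall>i\<in>UNIV. z $ i = 0 then 1 else 0)" by (rule prod_ind) simp
  also have "\<dots> = point_mass z" unfolding point_mass_def by (simp add: vec_eq_iff)
  finally show ?thesis by simp
qed

lemma qconv_Aprod:
  assumes l: "l \<ge> 1"
  shows "qconv l z = Aprod l (z :: int ^ 'd::finite)"
proof -
  define D where "D = CARD('d)"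
  define g where "g i k = (if z $ i - k \<in> {0..int l - 1} then 1 else (0::real))" for i k
  have lp: "real l > 0" using l by simp
  have "qconv l z = (\<Sum>y\<in>Lam l. (1 / real l ^ D) * ((1 / real l ^ D) * (\<Prod>i\<in>UNIV. g i (y $ i))))"
    unfolding qconv_def
  proof (rule sum.cong[OF refl])
    fix y :: "int ^ 'd" assume y: "y \<in> Lam l"
    have "(\<Prod>i\<in>UNIV. g i (y $ i)) = (if \<forall>i\<in>UNIV. z $ i - y $ i \<in> {0..int l - 1} then 1 else 0)"
      unfolding g_def by (rule prod_ind) simp
    also have "\<dots> = (if z - y \<in> Lam l then 1 else 0)" unfolding Lam_def by simp
    finally show "punif l y * punif l (z - y) = (1 / real l ^ D) * ((1 / real l ^ D) * (\<Prod>i\<in>UNIV. g i (y $ i)))"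
      using y unfolding punif_def D_def by simp
  qed
  also have "\<dots> = (1 / real l ^ D) * ((1 / real l ^ D) * (\<Sum>y\<in>Lam l. \<Prod>i\<in>UNIV. g i (y $ i)))"
    by (simp add: sum_distrib_left)
  also have "(\<Sum>y\<in>Lam l. \<Prod>i\<in>UNIV. g i (y $ i)) = (\<Prod>i\<in>UNIV. \<Sum>k\<in>{0..int l - 1}. g i k)"
    by (rule box_prod)
  also have "\<dots> = (\<Prod>i\<in>UNIV. real (card (Sset l (z $ i))))"
    unfolding g_def card_Sset_sum by simp
  finally have q: "qconv l z = (1 / real l ^ D) * ((1 / real l ^ D) * (\<Prod>i\<in>UNIV. real (card (Sset l (z $ i)))))" .
  have "Aprod l z = (\<Prod>i\<in>UNIV. real (card (Sset l (z $ i)))) / ((real l)^2) ^ D"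
    unfolding Aprod_def tau_def D_def by (simp add: prod_dividef)
  also have "\<dots> = (1 / real l ^ D) * ((1 / real l ^ D) * (\<Prod>i\<in>UNIV. real (card (Sset l (z $ i)))))"
  proof -
    have "((real l)^2)^D = real l ^ D * real l ^ D" by (simp add: power2_eq_square power_mult_distrib)
    thus ?thesis by simp
  qed
  finally show ?thesis using q by simp
qed

lemma Phi_supp:
  assumes nz: "Phi r t z b \<noteq> 0" and t: "1 \<le> t" "t < l"
  shows "z \<in> Lam (2*l-1) \<and> z + basis_vec b \<in> Lam (2*l-1)"
proof -
  have f: "fac r t b i (z $ i) \<noteq> 0" for i
    using nz unfolding Phi_def by (auto simp: prod_zero_iff)
  have lam: "int (2*l-1) - 1 = 2 * int l - 2" using t by simp
  have hb: "0 \<le> z $ b \<and> z $ b \<le> 2 * int t - 1"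
  proof -
    have "hh t (z $ b) \<noteq> 0" using f[of b] unfolding fac_def by simp
    thus ?thesis using hh_neg[of "z $ b" t] hh_big[OF t(1), of "z $ b"] by force
  qed
  have hi: "0 \<le> z $ i \<and> z $ i \<le> 2 * int t" if "i \<noteq> b" for i
  proof (cases "r i < r b")
    case True
    hence "tau (Suc t) (z $ i) \<noteq> 0" using f[of i] that unfolding fac_def by simp
    thus ?thesis using tau_supp by force
  next
    case False
    hence "tau t (z $ i) \<noteq> 0" using f[of i] that unfolding fac_def by simp
    thus ?thesis using tau_supp by force
  qed
  have "0 \<le> z $ i \<and> z $ i \<le> 2 * int l - 2 \<and> 0 \<le> (z + basis_vec b) $ i \<and> (z + basis_vec b) $ i \<le> 2 * int l - 2" for i
    using hb hi[of i] t by (cases "i = b") (auto simp: basis_vec_def axis_def)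
  thus ?thesis unfolding Lam_def lam by auto
qed

lemma phi_supp:
  assumes "l \<ge> 1"
  shows "flow_supported_in (phi r l) (Lam (2*l-1))"
  unfolding flow_supported_in_def
proof (intro allI impI)
  fix x b assume "phi r l x b \<noteq> 0"
  then obtain t where t: "t \<in> {1..<l}" "Phi r t x b \<noteq> 0"
    unfolding phi_def by (meson sum.neutral)
  have "1 \<le> t" "t < l" using t by auto
  thus "x \<in> Lam (2*l-1) \<and> x + basis_vec b \<in> Lam (2*l-1)" using Phi_supp[OF t(2)] by blast
qed

lemma phi_connects:
  fixes r :: "'d::finite \<Rightarrow> nat"
  assumes "inj r" "l \<ge> 1"
  shows "flow_connects (phi r l) point_mass (qconv l)"
  unfolding flow_connects_def
proof
  fix z :: "int ^ 'd"
  have "(\<Sum>b\<in>UNIV. phi r l z b - phi r l (z - basis_vec b) b)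
      = (\<Sum>b\<in>UNIV. \<Sum>t\<in>{1..<l}. Phi r t z b - Phi r t (z - basis_vec b) b)"
    unfolding phi_def by (simp add: sum_subtractf)
  also have "\<dots> = (\<Sum>t\<in>{1..<l}. \<Sum>b\<in>UNIV. Phi r t z b - Phi r t (z - basis_vec b) b)"
    by (rule sum.swap)
  also have "\<dots> = (\<Sum>t\<in>{1..<l}. Aprod t z - Aprod (Suc t) z)"
    using div_Phi[OF assms(1)] by simp
  also have "\<dots> = Aprod 1 z - Aprod l z"
    using sum_Suc_diff'[OF assms(2), of "\<lambda>t. - Aprod t z"] by (simp add: sum_negf[symmetric])
  also have "\<dots> = point_mass z - qconv l z"
    by (simp only: point_mass_Aprod qconv_Aprod[OF assms(2)])
  finally show "point_mass z - qconv l z = (\<Sum>b\<in>UNIV. phi r l z b - phi r l (z - basis_vec b) b)" by simp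
qed

lemma sum_pair: "(\<Sum>(z,b)\<in>A \<times> B. f z b) = (\<Sum>z\<in>A. \<Sum>b\<in>B. f z b)"
  by (simp add: sum.cartesian_product)

lemma Phi_abs_bound:
  fixes r :: "'d::finite \<Rightarrow> nat"
  assumes t: "t \<ge> 1"
  shows "\<bar>Phi r t z b\<bar> \<le> 9 / real t ^ CARD('d)"
proof -
  have tp: "real t \<ge> 1" using t by simp
  have fb: "\<bar>fac r t b i (z$i)\<bar> \<le> 1 / real t" if "i \<noteq> b" for i
  proof -
    have "tau (Suc t) (z$i) \<le> 1 / real t"
    proof -
      have "tau (Suc t) (z$i) \<le> 1 / real (Suc t)" by (rule tau_le) simp
      also have "\<dots> \<le> 1 / real t" using tp by (intro divide_left_mono) auto
      finally show ?thesis .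
    qed
    thus ?thesis using that tau_le[OF t] tau_nonneg unfolding fac_def by auto
  qed
  have "\<bar>Phi r t z b\<bar> = (\<Prod>i\<in>UNIV. \<bar>fac r t b i (z$i)\<bar>)" unfolding Phi_def by (simp add: abs_prod)
  also have "\<dots> = \<bar>fac r t b b (z$b)\<bar> * (\<Prod>i\<in>UNIV-{b}. \<bar>fac r t b i (z$i)\<bar>)"
    by (simp add: prod.remove)
  also have "\<dots> \<le> (9 / real t) * (\<Prod>i\<in>UNIV-{b}. 1 / real t)"
  proof (rule mult_mono)
    show "\<bar>fac r t b b (z $ b)\<bar> \<le> 9 / real t" unfolding fac_def using hh_bound[OF t] by simp
    show "(\<Prod>i\<in>UNIV-{b}. \<bar>fac r t b i (z$i)\<bar>) \<le> (\<Prod>i\<in>UNIV-{b}. 1 / real t)"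
    proof (rule prod_mono)
      fix i assume "i \<in> UNIV - {b}"
      thus "0 \<le> \<bar>fac r t b i (z$i)\<bar> \<and> \<bar>fac r t b i (z$i)\<bar> \<le> 1 / real t" using fb[of i] by simp
    qed
    show "0 \<le> 9 / real t" by simp
    show "0 \<le> (\<Prod>i\<in>UNIV-{b}. \<bar>fac r t b i (z$i)\<bar>)" by (rule prod_nonneg) simp
  qed
  also have "\<dots> = 9 / real t ^ CARD('d)"
  proof -
    have "CARD('d) > 0" by (simp add: finite_UNIV_card_ge_0)
    then obtain n where n: "CARD('d) = Suc n" using gr0_implies_Suc by blast
    have "card (UNIV - {b}) = n" using n by (simp add: card_Diff_singleton)
    thus ?thesis using n by (simp add: power_one_over)
  qed
  finally show ?thesis .
qed

lemma hh_L1: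
  assumes t: "t \<ge> 1" and K: "finite K"
  shows "(\<Sum>k\<in>K. \<bar>hh t k\<bar>) \<le> 18"
proof -
  have "(\<Sum>k\<in>K. \<bar>hh t k\<bar>) = (\<Sum>k\<in>K \<inter> {0..2 * int t - 1}. \<bar>hh t k\<bar>)"
  proof (rule sum.mono_neutral_right)
    show "\<forall>i\<in>K - K \<inter> {0..2 * int t - 1}. \<bar>hh t i\<bar> = 0"
    proof (intro ballI)
      fix i assume "i \<in> K - K \<inter> {0..2 * int t - 1}"
      hence "i < 0 \<or> i \<ge> 2 * int t" by auto
      thus "\<bar>hh t i\<bar> = 0" using hh_neg[of i t] hh_big[OF t, of i] by auto
    qed
  qed (use K in auto)
  also have "\<dots> \<le> (\<Sum>k\<in>{0..2 * int t - 1}. \<bar>hh t k\<bar>)"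
    by (rule sum_mono2) auto
  also have "\<dots> \<le> (\<Sum>k\<in>{0..2 * int t - 1}. 9 / real t)"
    by (rule sum_mono) (rule hh_bound[OF t])
  also have "\<dots> = 18"
  proof -
    have "card {0..2 * int t - 1} = 2 * t" by simp
    thus ?thesis using t by simp
  qed
  finally show ?thesis .
qed

lemma Phi_L1:
  fixes r :: "'d::finite \<Rightarrow> nat"
  assumes t: "1 \<le> t" "t < l"
  shows "(\<Sum>z\<in>Lam (2*l-1). \<bar>Phi r t z b\<bar>) \<le> 18"
proof -
  define G where "G i = (\<Sum>k\<in>{0..int (2*l-1) - 1}. \<bar>fac r t b i k\<bar>)" for i
  have lam: "int (2*l-1) - 1 = 2 * int l - 2" using t by simp
  have "(\<Sum>z\<in>Lam (2*l-1). \<bar>Phi r t z b\<bar>) = (\<Sum>z\<in>Lam (2*l-1). \<Prod>i\<in>UNIV. \<bar>fac r t b i (z $ i)\<bar>)"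
    unfolding Phi_def by (simp add: abs_prod)
  also have "\<dots> = (\<Prod>i\<in>UNIV. G i)" unfolding G_def by (rule box_prod)
  also have "\<dots> = G b * (\<Prod>i\<in>UNIV-{b}. G i)" by (simp add: prod.remove)
  also have "\<dots> \<le> 18 * 1"
  proof (rule mult_mono)
    show "G b \<le> 18" unfolding G_def fac_def using hh_L1[OF t(1)] by simp
    show "(\<Prod>i\<in>UNIV-{b}. G i) \<le> 1"
    proof (rule prod_le_1)
      fix i assume i: "i \<in> UNIV - {b}"
      have m: "(\<Sum>k\<in>{0..int (2*l-1) - 1}. tau s k) = 1" if "s \<ge> 1" "s \<le> Suc t" for s
        using that t by (intro mass) (auto simp: lam)
      have "G i = 1"
      proof (cases "r i < r b")
        case True
        thus ?thesis using i m[of "Suc t"] unfolding G_def fac_def by (simp add: tau_nonneg)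
      next
        case False
        thus ?thesis using i m[of t] t unfolding G_def fac_def by (simp add: tau_nonneg)
      qed
      thus "0 \<le> G i \<and> G i \<le> 1" by simp
    qed
  qed (auto simp: G_def intro: prod_nonneg)
  finally show ?thesis by simp
qed

lemma W_bound:
  fixes r :: "'d::finite \<Rightarrow> nat"
  assumes t: "1 \<le> t" "t < l"
  shows "(\<Sum>z\<in>Lam (2*l-1). \<Sum>b\<in>UNIV. \<bar>Phi r t z b\<bar>) \<le> 18 * real CARD('d)"
proof -
  have "(\<Sum>z\<in>Lam (2*l-1). \<Sum>b\<in>UNIV. \<bar>Phi r t z b\<bar>) = (\<Sum>b\<in>UNIV. \<Sum>z\<in>Lam (2*l-1). \<bar>Phi r t z b\<bar>)"
    by (rule sum.swap)
  also have "\<dots> \<le> (\<Sum>b\<in>(UNIV::'d set). 18)"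
    by (rule sum_mono) (rule Phi_L1[OF t])
  finally show ?thesis by simp
qed

lemma quad:
  fixes x :: "nat \<Rightarrow> real"
  assumes "finite T" "\<And>t. x t \<ge> 0"
  shows "(\<Sum>t\<in>T. x t)^2 \<le> 2 * (\<Sum>s\<in>T. \<Sum>t\<in>T. if s \<le> t then x s * x t else 0)"
proof -
  define A where "A = (\<Sum>s\<in>T. \<Sum>t\<in>T. if s \<le> t then x s * x t else 0)"
  have "(\<Sum>t\<in>T. x t)^2 = (\<Sum>s\<in>T. \<Sum>t\<in>T. x s * x t)"
    by (simp add: power2_eq_square sum_product)
  also have "\<dots> \<le> (\<Sum>s\<in>T. \<Sum>t\<in>T. (if s \<le> t then x s * x t else 0) + (if t \<le> s then x s * x t else 0))"
    by (intro sum_mono) (use assms(2) in auto)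
  also have "\<dots> = A + (\<Sum>s\<in>T. \<Sum>t\<in>T. if t \<le> s then x s * x t else 0)"
    unfolding A_def by (simp add: sum.distrib)
  also have "(\<Sum>s\<in>T. \<Sum>t\<in>T. if t \<le> s then x s * x t else 0) = A"
    unfolding A_def by (subst sum.swap) (intro sum.cong refl, auto simp: mult.commute)
  finally show ?thesis unfolding A_def by simp
qed

lemma harm_bound:
  assumes d: "d \<ge> 1" and l: "l \<ge> 1"
  shows "(\<Sum>t\<in>{1..<l}. real t / real t ^ d) \<le> 2 * g_d d l"
proof -
  consider "d = 1" | "d = 2" | "d \<ge> 3" using d by linarith
  thus ?thesis
  proof cases
    case 1
    have "(\<Sum>t\<in>{1..<l}. real t / real t ^ d) = (\<Sum>t\<in>{1..<l}. 1)"
      using 1 by (intro sum.cong) auto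
    also have "\<dots> = real l - 1" using l by simp
    finally show ?thesis using 1 unfolding g_d_def by simp
  next
    case 2
    have "(\<Sum>t\<in>{1..<l}. real t / real t ^ d) \<le> (\<Sum>t\<in>{1..<l}. 2 * (ln (real (Suc t)) - ln (real t)))"
    proof (rule sum_mono)
      fix t assume t: "t \<in> {1..<l}"
      hence tp: "real t \<ge> 1" by simp
      have "ln (real t / real (Suc t)) \<le> real t / real (Suc t) - 1"
        using tp by (intro ln_le_minus_one) auto
      moreover have "ln (real t / real (Suc t)) = ln (real t) - ln (real (Suc t))"
        using tp by (intro ln_divide_pos) auto
      moreover have "real t / real (Suc t) - 1 = - 1 / (real t + 1)"
        using tp by (simp add: field_simps)
      ultimately have a: "1 / (real t + 1) \<le> ln (real (Suc t)) - ln (real t)" by simp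
      have b: "1 / real t \<le> 2 * (1 / (real t + 1))" using tp by (simp add: field_simps)
      have "real t / real t ^ d = 1 / real t" using 2 tp by (simp add: power2_eq_square)
      moreover have "1 / real t \<le> 2 * (ln (real (Suc t)) - ln (real t))"
        using order_trans[OF b mult_left_mono[OF a]] by simp
      ultimately show "real t / real t ^ d \<le> 2 * (ln (real (Suc t)) - ln (real t))" by simp
    qed
    also have "\<dots> = 2 * (\<Sum>t\<in>{1..<l}. ln (real (Suc t)) - ln (real t))"
      by (rule sum_distrib_left[symmetric])
    also have "\<dots> = 2 * (ln (real l) - ln (real 1))"
      using sum_Suc_diff'[OF l, of "\<lambda>t. ln (real t)"] by simp
    finally show ?thesis using 2 unfolding g_d_def by simp
  next
    case 3
    have "(\<Sum>t\<in>{1..<l}. real t / real t ^ d) \<le> (\<Sum>t\<in>{1..<l}. 2 * ((- 1 / real (Suc t)) - (- 1 / real t)))"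
    proof (rule sum_mono)
      fix t assume t: "t \<in> {1..<l}"
      hence tp: "real t \<ge> 1" by simp
      define e where "e = d - 3"
      have e: "d = Suc (Suc (Suc e))" using 3 unfolding e_def by presburger
      have "real t / real t ^ d = 1 / (real t ^ 2 * real t ^ e)"
        using tp e by (simp add: power2_eq_square)
      also have "\<dots> \<le> 1 / real t ^ 2"
        using tp by (intro divide_left_mono) (auto simp: one_le_power)
      also have "\<dots> \<le> 2 * ((- 1 / real (Suc t)) - (- 1 / real t))"
      proof -
        have e1: "2 * ((- 1 / real (Suc t)) - (- 1 / real t)) = 2 / (real t * (real t + 1))"
          using tp by (simp add: field_simps)
        have e2: "1 / real t ^ 2 = 2 / (2 * (real t * real t))" by (simp add: power2_eq_square)
        have "2 / (2 * (real t * real t)) \<le> 2 / (real t * (real t + 1))"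
        proof -
          have p: "0 < (2 * (real t * real t)) * (real t * (real t + 1))" using tp by (intro mult_pos_pos) auto
          have q: "real t \<le> real t * real t" using tp mult_left_mono[of 1 "real t" "real t"] by simp
          have le: "real t * (real t + 1) \<le> 2 * (real t * real t)" using q by (simp add: algebra_simps)
          show ?thesis by (rule divide_left_mono[OF le _ p]) simp
        qed
        thus ?thesis using e1 e2 by simp
      qed
      finally show "real t / real t ^ d \<le> 2 * ((- 1 / real (Suc t)) - (- 1 / real t))" .
    qed
    also have "\<dots> = 2 * (\<Sum>t\<in>{1..<l}. (- 1 / real (Suc t)) - (- 1 / real t))"
      by (rule sum_distrib_left[symmetric])
    also have "\<dots> = 2 * ((- 1 / real l) - (- 1 / real 1))"
      using sum_Suc_diff'[OF l, of "\<lambda>t. - 1 / real t"] by simp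
    also have "\<dots> \<le> 2" by simp
    finally show ?thesis using 3 unfolding g_d_def by simp
  qed
qed

lemma swap3:
  fixes F :: "'a \<Rightarrow> 'b \<Rightarrow> 'c \<Rightarrow> real"
  shows "(\<Sum>z\<in>A. \<Sum>b\<in>B. \<Sum>s\<in>S. F z b s) = (\<Sum>s\<in>S. \<Sum>z\<in>A. \<Sum>b\<in>B. F z b s)"
proof -
  have "(\<Sum>z\<in>A. \<Sum>b\<in>B. \<Sum>s\<in>S. F z b s) = (\<Sum>z\<in>A. \<Sum>s\<in>S. \<Sum>b\<in>B. F z b s)"
    by (intro sum.cong refl) (rule sum.swap)
  also have "\<dots> = (\<Sum>s\<in>S. \<Sum>z\<in>A. \<Sum>b\<in>B. F z b s)" by (rule sum.swap)
  finally show ?thesis .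
qed

lemma energy:
  fixes r :: "'d::finite \<Rightarrow> nat"
  assumes l: "l \<ge> 1"
  shows "(\<Sum>(z, b) \<in> Lam (2 * l - 1) \<times> UNIV. (phi r l z b)\<^sup>2) \<le> 648 * real CARD('d) * g_d CARD('d) l"
proof -
  define d where "d = CARD('d)"
  define T where "T = {1..<l}"
  define P where "P = (Lam (2 * l - 1) :: (int ^ 'd) set)"
  define M where "M t = 9 / real t ^ d" for t :: nat
  define N where "N s = (\<Sum>t\<in>T. if s \<le> t then M t else 0)" for s
  have d1: "d \<ge> 1" unfolding d_def using finite_UNIV_card_ge_0[where 'a='d] by simp
  have Mnn: "M t \<ge> 0" for t unfolding M_def by simp
  have Nnn: "N s \<ge> 0" for s unfolding N_def using Mnn by (intro sum_nonneg) auto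
  have pt: "(phi r l z b)\<^sup>2 \<le> 2 * (\<Sum>s\<in>T. \<bar>Phi r s z b\<bar> * N s)" for z b
  proof -
    have a: "\<bar>phi r l z b\<bar> \<le> (\<Sum>t\<in>T. \<bar>Phi r t z b\<bar>)" unfolding phi_def T_def by (rule sum_abs)
    have "(phi r l z b)\<^sup>2 = \<bar>phi r l z b\<bar>\<^sup>2" by simp
    also have "\<dots> \<le> (\<Sum>t\<in>T. \<bar>Phi r t z b\<bar>)\<^sup>2" by (rule power_mono[OF a]) simp
    also have "\<dots> \<le> 2 * (\<Sum>s\<in>T. \<Sum>t\<in>T. if s \<le> t then \<bar>Phi r s z b\<bar> * \<bar>Phi r t z b\<bar> else 0)"
      by (rule quad) (auto simp: T_def)
    also have "\<dots> \<le> 2 * (\<Sum>s\<in>T. \<Sum>t\<in>T. if s \<le> t then \<bar>Phi r s z b\<bar> * M t else 0)"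
    proof -
      have "(if s \<le> t then \<bar>Phi r s z b\<bar> * \<bar>Phi r t z b\<bar> else 0) \<le> (if s \<le> t then \<bar>Phi r s z b\<bar> * M t else 0)"
        if "t \<in> T" for s t
      proof -
        have "t \<ge> 1" using that unfolding T_def by simp
        hence "\<bar>Phi r t z b\<bar> \<le> M t" unfolding M_def d_def by (rule Phi_abs_bound)
        thus ?thesis by (simp add: mult_left_mono)
      qed
      thus ?thesis by (intro mult_left_mono sum_mono) auto
    qed
    also have "\<dots> = 2 * (\<Sum>s\<in>T. \<bar>Phi r s z b\<bar> * N s)"
      unfolding N_def sum_distrib_left by (intro arg_cong[where f = "\<lambda>x. 2 * x"] sum.cong refl) simp
    finally show ?thesis .
  qed
  have "(\<Sum>(z, b) \<in> P \<times> UNIV. (phi r l z b)\<^sup>2) = (\<Sum>z\<in>P. \<Sum>b\<in>UNIV. (phi r l z b)\<^sup>2)"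
    by (rule sum_pair)
  also have "\<dots> \<le> (\<Sum>z\<in>P. \<Sum>b\<in>UNIV. 2 * (\<Sum>s\<in>T. \<bar>Phi r s z b\<bar> * N s))"
    by (intro sum_mono pt)
  also have "\<dots> = 2 * (\<Sum>z\<in>P. \<Sum>b\<in>UNIV. \<Sum>s\<in>T. \<bar>Phi r s z b\<bar> * N s)"
    by (simp add: sum_distrib_left)
  also have "(\<Sum>z\<in>P. \<Sum>b\<in>UNIV. \<Sum>s\<in>T. \<bar>Phi r s z b\<bar> * N s) = (\<Sum>s\<in>T. \<Sum>z\<in>P. \<Sum>b\<in>UNIV. \<bar>Phi r s z b\<bar> * N s)"
    by (rule swap3)
  also have "\<dots> = (\<Sum>s\<in>T. N s * (\<Sum>z\<in>P. \<Sum>b\<in>UNIV. \<bar>Phi r s z b\<bar>))"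
    by (simp add: sum_distrib_left sum_distrib_right mult.commute)
  also have "\<dots> \<le> (\<Sum>s\<in>T. N s * (18 * real d))"
  proof (rule sum_mono)
    fix s assume "s \<in> T"
    hence "1 \<le> s" "s < l" unfolding T_def by auto
    thus "N s * (\<Sum>z\<in>P. \<Sum>b\<in>UNIV. \<bar>Phi r s z b\<bar>) \<le> N s * (18 * real d)"
      unfolding P_def d_def by (intro mult_left_mono Nnn W_bound)
  qed
  also have "(\<Sum>s\<in>T. N s * (18 * real d)) = (\<Sum>s\<in>T. N s) * (18 * real d)"
    by (rule sum_distrib_right[symmetric])
  also have "\<dots> = 18 * real d * (\<Sum>s\<in>T. N s)"
    by (rule mult.commute)
  also have "(\<Sum>s\<in>T. N s) = (\<Sum>t\<in>T. \<Sum>s\<in>T. if s \<le> t then M t else 0)"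
    unfolding N_def by (rule sum.swap)
  also have "\<dots> \<le> (\<Sum>t\<in>T. 9 * (real t / real t ^ d))"
  proof (rule sum_mono)
    fix t assume t: "t \<in> T"
    have "(\<Sum>s\<in>T. if s \<le> t then M t else 0) = real (card {s\<in>T. s \<le> t}) * M t"
      by (simp add: sum.inter_filter[symmetric] T_def)
    also have "\<dots> \<le> real t * M t"
    proof (rule mult_right_mono[OF _ Mnn])
      have "card {s\<in>T. s \<le> t} \<le> card {1..t}" unfolding T_def by (intro card_mono) auto
      thus "real (card {s\<in>T. s \<le> t}) \<le> real t" by simp
    qed
    also have "\<dots> = 9 * (real t / real t ^ d)" unfolding M_def by simp
    finally show "(\<Sum>s\<in>T. if s \<le> t then M t else 0) \<le> 9 * (real t / real t ^ d)" .
  qed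
  also have "\<dots> = 9 * (\<Sum>t\<in>T. real t / real t ^ d)" by (simp add: sum_distrib_left)
  also have "\<dots> \<le> 9 * (2 * g_d d l)" unfolding T_def using harm_bound[OF d1 l] by simp
  finally have "(\<Sum>(z, b) \<in> P \<times> UNIV. (phi r l z b)\<^sup>2) \<le> 2 * (18 * real d * (9 * (2 * g_d d l)))"
    by (simp add: mult_left_mono)
  thus ?thesis unfolding P_def d_def by simp
qed

lemma l1_bound:
  fixes r :: "'d::finite \<Rightarrow> nat"
  assumes l: "l \<ge> 1"
  shows "(\<Sum>(z, b) \<in> Lam (2 * l - 1) \<times> UNIV. \<bar>phi r l z b\<bar>) \<le> 648 * real CARD('d) * real l"
proof -
  define P where "P = (Lam (2 * l - 1) :: (int ^ 'd) set)"
  define T where "T = {1..<l}"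
  have "(\<Sum>(z, b) \<in> P \<times> UNIV. \<bar>phi r l z b\<bar>) = (\<Sum>z\<in>P. \<Sum>b\<in>UNIV. \<bar>phi r l z b\<bar>)"
    by (rule sum_pair)
  also have "\<dots> \<le> (\<Sum>z\<in>P. \<Sum>b\<in>UNIV. \<Sum>t\<in>T. \<bar>Phi r t z b\<bar>)"
    unfolding phi_def T_def by (intro sum_mono sum_abs)
  also have "\<dots> = (\<Sum>t\<in>T. \<Sum>z\<in>P. \<Sum>b\<in>UNIV. \<bar>Phi r t z b\<bar>)" by (rule swap3)
  also have "\<dots> \<le> (\<Sum>t\<in>T. 18 * real CARD('d))"
  proof (rule sum_mono)
    fix t assume "t \<in> T"
    hence "1 \<le> t" "t < l" unfolding T_def by auto
    thus "(\<Sum>z\<in>P. \<Sum>b\<in>UNIV. \<bar>Phi r t z b\<bar>) \<le> 18 * real CARD('d)"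
      unfolding P_def by (rule W_bound)
  qed
  also have "\<dots> = real (l - 1) * (18 * real CARD('d))" unfolding T_def by simp
  also have "\<dots> \<le> real l * (648 * real CARD('d))" by (intro mult_mono) auto
  finally show ?thesis unfolding P_def by (simp add: mult_ac)
qed

theorem lemma3p2:
  shows "\<exists>C::real. \<forall>l::nat. l \<ge> 1 \<longrightarrow>
    (\<exists>\<phi> :: int ^ 'd::finite \<Rightarrow> 'd \<Rightarrow> real.
       flow_connects \<phi> point_mass (qconv l) \<and>
       flow_supported_in \<phi> (Lam (2 * l - 1)) \<and>
       (\<Sum>(z, b) \<in> Lam (2 * l - 1) \<times> UNIV. (\<phi> z b)\<^sup>2) \<le> C * g_d CARD('d) l \<and>
       (\<Sum>(z, b) \<in> Lam (2 * l - 1) \<times> UNIV. \<bar>\<phi> z b\<bar>) \<le> C * real l)"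
proof -
  obtain r :: "'d \<Rightarrow> nat" where r: "inj r"
    using finite_imp_inj_to_nat_seg[of "UNIV :: 'd set"] by auto
  show ?thesis
  proof (rule exI[of _ "648 * real CARD('d)"], intro allI impI)
    fix l :: nat assume l: "l \<ge> 1"
    show "\<exists>\<phi> :: int ^ 'd \<Rightarrow> 'd \<Rightarrow> real.
       flow_connects \<phi> point_mass (qconv l) \<and>
       flow_supported_in \<phi> (Lam (2 * l - 1)) \<and>
       (\<Sum>(z, b) \<in> Lam (2 * l - 1) \<times> UNIV. (\<phi> z b)\<^sup>2) \<le> 648 * real CARD('d) * g_d CARD('d) l \<and>
       (\<Sum>(z, b) \<in> Lam (2 * l - 1) \<times> UNIV. \<bar>\<phi> z b\<bar>) \<le> 648 * real CARD('d) * real l"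
      using phi_connects[OF r l] phi_supp[OF l, of r] energy[OF l, of r] l1_bound[OF l, of r]
      by blast
  qed
qed

end
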